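(* Let $\alpha>0,\lambda>0$ and $\beta\in\mathbb{R}$ with $\alpha+\beta>0$. Let $X$ be a strictly positive random variable with $\mathbb{E}[X^\beta]<\infty$. Then for every $\tau\in(0,1)$, $\mathbb{E}[X_\tau^\beta]<\infty$ and $$\mathbb{E}[X_\tau^\beta]=\Big(\frac{\lambda}{1-\tau}\Big)^{-\beta}\frac{\Gamma(\alpha+\beta)}{\Gamma(\alpha)}\int_0^\infty e^{-\frac{\lambda\tau x}{1-\tau}}\,{}_1F_1\Big(\alpha+\beta;\alpha;\frac{\lambda\tau x}{1-\tau}\Big)\mathbb{P}_X(dx),$$ where ${}_1F_1$ is Kummer's confluent hypergeometric function.
   Context: $\mathbb{P}_X$ is the law of $X$. For $\tau\in(0,1)$, the gamma smart path $X_\tau$ is defined as follows: conditionally on $X=x$, let $K$ be Poisson with mean $\lambda\tau x/(1-\tau)$; conditionally on $X=x,K=k$, let $Y=0$ if $k=0$ and let $Y$ be gamma distributed with shape $k$ and rate $\lambda\tau/(1-\tau)$ if $k\ge1$; let $\gamma(\alpha,\lambda)$ be a random variable with density $\frac{\lambda^\alpha}{\Gamma(\alpha)}u^{\alpha-1}e^{-\lambda u}$ independent of $(X,K,Y)$; set $X_\tau=(1-\tau)\gamma(\alpha,\lambda)+\tau Y$. *)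

theory Defs
  imports "HOL-Probability.Probability"
begin

definition gamma_density :: "real \<Rightarrow> real \<Rightarrow> real \<Rightarrow> real" where
  "gamma_density a l u =
     (if u > 0 then l powr a / Gamma a * u powr (a - 1) * exp (- l * u) else 0)"

definition gamma_measure :: "real \<Rightarrow> real \<Rightarrow> real measure" where
  "gamma_measure a l = density lborel (\<lambda>u. ennreal (gamma_density a l u))"

definition poisson_measure :: "real \<Rightarrow> nat measure" where
  "poisson_measure r = density (count_space UNIV) (\<lambda>k. ennreal (r ^ k / fact k * exp (- r)))"

definition kummer_1F1 :: "real \<Rightarrow> real \<Rightarrow> real \<Rightarrow> real" where
  "kummer_1F1 a b z = (\<Sum>n. pochhammer a n / pochhammer b n * z ^ n / fact n)"

text \<open>Law of the gamma smart path X_tau, given the law PX of X: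
  draw x from PX, K ~ Poisson(lambda tau x/(1-tau)), Y = 0 if K = 0 and
  Y ~ Gamma(K, lambda tau/(1-tau)) otherwise, an independent G ~ Gamma(alpha, lambda),
  and return (1-tau) G + tau Y.\<close>
definition smart_path_law :: "real \<Rightarrow> real \<Rightarrow> real \<Rightarrow> real measure \<Rightarrow> real measure" where
  "smart_path_law \<alpha> lam \<tau> PX =
     PX \<bind> (\<lambda>x.
       poisson_measure (lam * \<tau> * x / (1 - \<tau>)) \<bind> (\<lambda>k.
         (if k = 0 then return borel 0 else gamma_measure (real k) (lam * \<tau> / (1 - \<tau>))) \<bind> (\<lambda>y.
           gamma_measure \<alpha> lam \<bind> (\<lambda>g.
             return borel ((1 - \<tau>) * g + \<tau> * y)))))"

end

theory Submission
  imports Defs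
begin

lemma gamma_int:
  fixes a rho :: real assumes a: "a > 0" and r: "rho > 0"
  shows "(\<integral>\<^sup>+y. ennreal (if y > 0 then y powr (a-1) * exp(-rho*y) else 0) \<partial>lborel)
         = ennreal (Gamma a * rho powr (-a))"
proof -
  let ?f = "\<lambda>t::real. ennreal (indicator {0..} t * t powr (a - 1) / exp t)"
  have "ennreal (Gamma a) = (\<integral>\<^sup>+t. ?f t \<partial>lborel)"
    using Gamma_conv_nn_integral_real[OF a] by simp
  also have "\<dots> = ennreal \<bar>rho\<bar> * (\<integral>\<^sup>+x. ?f (0 + rho * x) \<partial>lborel)"
    by (rule nn_integral_real_affine) (use r in auto)
  also have "(\<integral>\<^sup>+x. ?f (0 + rho * x) \<partial>lborel) =
     (\<integral>\<^sup>+x. ennreal (rho powr (a-1)) * ennreal (if x > 0 then x powr (a-1) * exp(-rho*x) else 0) \<partial>lborel)"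
  proof (rule nn_integral_cong)
    fix x :: real
    show "?f (0 + rho * x) = ennreal (rho powr (a-1)) * ennreal (if x > 0 then x powr (a-1) * exp(-rho*x) else 0)"
      using r by (auto simp: indicator_def ennreal_mult'[symmetric] powr_mult exp_minus field_simps zero_le_mult_iff)
  qed
  also have "\<dots> = ennreal (rho powr (a-1)) * (\<integral>\<^sup>+y. ennreal (if y > 0 then y powr (a-1) * exp(-rho*y) else 0) \<partial>lborel)"
    by (rule nn_integral_cmult) auto
  finally have eq: "ennreal (Gamma a) = ennreal (rho * rho powr (a-1)) * (\<integral>\<^sup>+y. ennreal (if y > 0 then y powr (a-1) * exp(-rho*y) else 0) \<partial>lborel)"
    using r by (simp add: ennreal_mult' mult.assoc)
  have rr: "rho * rho powr (a-1) = rho powr a" using r by (simp add: powr_diff)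
  have pos: "rho powr a > 0" using r by simp
  have "ennreal (Gamma a * rho powr (-a)) = ennreal (rho powr (-a)) * ennreal (Gamma a)"
    using Gamma_real_pos[OF a] r by (simp add: ennreal_mult' mult.commute)
  also have "\<dots> = ennreal (rho powr (-a) * rho powr a) * (\<integral>\<^sup>+y. ennreal (if y > 0 then y powr (a-1) * exp(-rho*y) else 0) \<partial>lborel)"
    unfolding eq rr using r by (simp add: ennreal_mult' mult.assoc)
  also have "rho powr (-a) * rho powr a = 1" using r by (simp add: powr_minus field_simps)
  finally show ?thesis by simp
qed

lemma sets_gamma_measure[measurable_cong, simp]: "sets (gamma_measure s l) = sets borel"
  by (simp add: gamma_measure_def)

lemma space_gamma_measure[simp]: "space (gamma_measure s l) = UNIV"
  by (simp add: gamma_measure_def)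

lemma gamma_density_nonneg: "s > 0 \<Longrightarrow> l > 0 \<Longrightarrow> gamma_density s l u \<ge> 0"
  using Gamma_real_pos[of s] by (simp add: gamma_density_def)

lemma gamma_density_scale:
  assumes c: "c > 0" and l: "l > 0"
  shows "c * gamma_density s (l/c) (c*x) = gamma_density s l x"
proof (cases "x > 0")
  case True
  have "c * ((l/c) powr s * (c*x) powr (s-1)) = l powr s * x powr (s-1)"
    using c l True by (simp add: powr_mult powr_divide powr_diff field_simps)
  then show ?thesis using True c l unfolding gamma_density_def
    by (simp add: zero_less_mult_iff)
qed (use c in \<open>auto simp: gamma_density_def zero_less_mult_iff\<close>)

lemma borel_gamma_density[measurable]: "gamma_density s l \<in> borel_measurable borel"
  unfolding gamma_density_def by measurable

lemma nn_integral_gamma: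
  assumes "f \<in> borel_measurable borel"
  shows "(\<integral>\<^sup>+u. f u \<partial>gamma_measure s l) = (\<integral>\<^sup>+u. ennreal (gamma_density s l u) * f u \<partial>lborel)"
  unfolding gamma_measure_def
  by (subst nn_integral_density) (use assms in auto)

lemma gamma_moment:
  fixes s l b :: real
  assumes s: "s > 0" and l: "l > 0" and sb: "s + b > 0"
  shows "(\<integral>\<^sup>+u. ennreal (u powr b) \<partial>gamma_measure s l) = ennreal (l powr (-b) * Gamma (s+b) / Gamma s)"
proof -
  have "(\<integral>\<^sup>+u. ennreal (u powr b) \<partial>gamma_measure s l) =
        (\<integral>\<^sup>+u. ennreal (gamma_density s l u) * ennreal (u powr b) \<partial>lborel)"
    by (rule nn_integral_gamma) auto
  also have "\<dots> = (\<integral>\<^sup>+u. ennreal (l powr s / Gamma s) *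
       ennreal (if u > 0 then u powr (s + b - 1) * exp (-l*u) else 0) \<partial>lborel)"
  proof (rule nn_integral_cong)
    fix u :: real
    show "ennreal (gamma_density s l u) * ennreal (u powr b) = ennreal (l powr s / Gamma s) *
       ennreal (if u > 0 then u powr (s + b - 1) * exp (-l*u) else 0)"
      using s l Gamma_real_pos[OF s]
      by (auto simp: gamma_density_def ennreal_mult'[symmetric] powr_add[symmetric] algebra_simps
           intro!: arg_cong[where f=ennreal])
  qed
  also have "\<dots> = ennreal (l powr s / Gamma s) * ennreal (Gamma (s+b) * l powr (- (s+b)))"
    by (subst nn_integral_cmult) (use gamma_int[OF sb l] in auto)
  also have "\<dots> = ennreal (l powr (-b) * Gamma (s+b) / Gamma s)"
  proof -
    have "l powr s * l powr (- (s+b)) = l powr (-b)" using l by (simp add: powr_add[symmetric])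
    then show ?thesis
    using s l Gamma_real_pos[OF s] Gamma_real_pos[OF sb]
    by (subst ennreal_mult'[symmetric]) (auto simp: field_simps)
  qed
  finally show ?thesis .
qed

lemma gamma_measure_prob:
  assumes s: "s > 0" and l: "l > 0"
  shows "prob_space (gamma_measure s l)"
proof
  have "emeasure (gamma_measure s l) (space (gamma_measure s l)) =
        (\<integral>\<^sup>+u. ennreal (u powr 0) \<partial>gamma_measure s l)"
  proof -
    have "emeasure (gamma_measure s l) (space (gamma_measure s l)) = (\<integral>\<^sup>+u. 1 \<partial>gamma_measure s l)"
      by simp
    also have "\<dots> = (\<integral>\<^sup>+u. ennreal (u powr 0) \<partial>gamma_measure s l)"
      by (subst (1 2) nn_integral_gamma)
         (auto intro!: nn_integral_cong simp: gamma_density_def)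
    finally show ?thesis .
  qed
  also have "\<dots> = 1" using gamma_moment[OF s l, of 0] s Gamma_real_pos[OF s] using l by (simp del: powr_zero_eq_one) (simp add: powr_def)
  finally show "emeasure (gamma_measure s l) (space (gamma_measure s l)) = 1" .
qed

lemma gamma_measure_scale:
  fixes c :: real
  assumes c: "c > 0" and s: "s > 0" and l: "l > 0" and f[measurable]: "f \<in> borel_measurable borel"
  shows "(\<integral>\<^sup>+u. f (c*u) \<partial>gamma_measure s l) = (\<integral>\<^sup>+u. f u \<partial>gamma_measure s (l/c))"
proof -
  have "(\<integral>\<^sup>+u. f u \<partial>gamma_measure s (l/c)) = (\<integral>\<^sup>+u. ennreal (gamma_density s (l/c) u) * f u \<partial>lborel)"
    by (rule nn_integral_gamma) auto
  also have "\<dots> = ennreal \<bar>c\<bar> * (\<integral>\<^sup>+x. ennreal (gamma_density s (l/c) (0 + c*x)) * f (0 + c*x) \<partial>lborel)"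
    by (rule nn_integral_real_affine) (use c in auto)
  also have "\<dots> = (\<integral>\<^sup>+x. ennreal (gamma_density s l x) * f (c*x) \<partial>lborel)"
    apply (subst nn_integral_cmult[symmetric])
     apply simp
    apply (rule nn_integral_cong)
    using c l s gamma_density_nonneg[OF s, of "l/c"]
    apply (simp add: mult.assoc[symmetric] ennreal_mult'[symmetric] gamma_density_scale)
    done
  also have "\<dots> = (\<integral>\<^sup>+u. f (c*u) \<partial>gamma_measure s l)"
    by (rule nn_integral_gamma[symmetric]) measurable
  finally show ?thesis ..
qed

lemma conv_aux:
  fixes s k r b :: real
  assumes s: "s > 0" and k: "k > 0" and r: "r > 0" and skb: "s + k + b > 0"
  shows "(\<integral>\<^sup>+y. \<integral>\<^sup>+u. ennreal ((u+y) powr b) \<partial>gamma_measure s r \<partial>gamma_measure k r)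
       = ennreal (r powr (-b) * Gamma (s+k+b) / (Gamma s * Gamma k)) *
         (\<integral>\<^sup>+w. ennreal (if w > 0 then w powr (s-1) * (1+w) powr (-(s+k)) else 0) \<partial>lborel)"
proof -
  define C0 where "C0 = r powr (s+k) / (Gamma s * Gamma k)"
  have C0: "C0 > 0" using s k r Gamma_real_pos[OF s] Gamma_real_pos[OF k] by (simp add: C0_def)
  define F where "F = (\<lambda>y w. ennreal (if y > 0 \<and> w > 0 then C0 * (w powr (s-1) * (1+w) powr b) *
                         (y powr (s+k+b-1) * exp (-(r*(1+w))*y)) else 0))"
  have Fm[measurable]: "case_prod F \<in> borel_measurable (lborel \<Otimes>\<^sub>M lborel)"
    unfolding F_def by measurable
  have inner: "ennreal (gamma_density k r y) * (\<integral>\<^sup>+u. ennreal ((u+y) powr b) \<partial>gamma_measure s r)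
      = (\<integral>\<^sup>+w. F y w \<partial>lborel)" for y
  proof (cases "y > 0")
    case False
    then show ?thesis by (simp add: gamma_density_def F_def)
  next
    case True
    have "(\<integral>\<^sup>+u. ennreal ((u+y) powr b) \<partial>gamma_measure s r)
        = (\<integral>\<^sup>+u. ennreal (gamma_density s r u) * ennreal ((u+y) powr b) \<partial>lborel)"
      by (rule nn_integral_gamma) measurable
    also have "\<dots> = ennreal \<bar>y\<bar> * (\<integral>\<^sup>+w. ennreal (gamma_density s r (0 + y*w)) * ennreal ((0 + y*w+y) powr b) \<partial>lborel)"
      by (rule nn_integral_real_affine) (use True in auto)
    finally have eq: "(\<integral>\<^sup>+u. ennreal ((u+y) powr b) \<partial>gamma_measure s r) = \<dots>" .
    have "ennreal (gamma_density k r y) * (\<integral>\<^sup>+u. ennreal ((u+y) powr b) \<partial>gamma_measure s r)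
       = (\<integral>\<^sup>+w. ennreal (gamma_density k r y * y) * (ennreal (gamma_density s r (y*w)) * ennreal ((y*w+y) powr b)) \<partial>lborel)"
    proof -
      have A: "(\<integral>\<^sup>+w. ennreal (gamma_density k r y * y) * (ennreal (gamma_density s r (y*w)) * ennreal ((y*w+y) powr b)) \<partial>lborel)
         = ennreal (gamma_density k r y * y) * (\<integral>\<^sup>+w. ennreal (gamma_density s r (y*w)) * ennreal ((y*w+y) powr b) \<partial>lborel)"
        by (rule nn_integral_cmult) measurable
      have B: "ennreal (gamma_density k r y * y) = ennreal (gamma_density k r y) * ennreal \<bar>y\<bar>"
        using True gamma_density_nonneg[OF k r, of y] by (simp add: ennreal_mult')
      show ?thesis unfolding eq A unfolding B by (simp only: mult.assoc add_0_left)
    qed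
    also have "\<dots> = (\<integral>\<^sup>+w. F y w \<partial>lborel)"
    proof (rule nn_integral_cong)
      fix w :: real
      show "ennreal (gamma_density k r y * y) * (ennreal (gamma_density s r (y*w)) * ennreal ((y*w+y) powr b)) = F y w"
      proof (cases "w > 0")
        case False
        then have "\<not> y * w > 0" using True by (simp add: zero_less_mult_iff)
        then show ?thesis using False by (simp add: gamma_density_def F_def)
      next
        case wpos: True
        have yw: "y*w > 0" using True wpos by simp
        have e1: "(y*w+y) powr b = y powr b * (1+w) powr b"
        proof -
          have "y*w+y = y*(1+w)" by (simp add: algebra_simps)
          then show ?thesis using True wpos by (simp add: powr_mult)
        qed
        have e2: "(y*w) powr (s-1) = y powr (s-1) * w powr (s-1)"
          using True wpos by (simp add: powr_mult)
        have e3: "y powr (k-1) * y * y powr (s-1) * y powr b = y powr (s+k+b-1)"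
        proof -
          have "y powr (k-1) * y * y powr (s-1) * y powr b = y powr (k-1) * y powr 1 * y powr (s-1) * y powr b"
            using True by simp
          also have "\<dots> = y powr (k - 1 + 1 + (s-1) + b)" by (simp only: powr_add)
          also have "k - 1 + 1 + (s-1) + b = s+k+b-1" by simp
          finally show ?thesis .
        qed
        have e4: "exp (- r * y) * exp (- r * (y*w)) = exp (-(r*(1+w))*y)"
          unfolding exp_add[symmetric] by (rule arg_cong[where f=exp]) (simp add: algebra_simps)
        have e5: "r powr k * r powr s = r powr (s+k)" by (subst add.commute) (simp add: powr_add)
        have gd: "gamma_density k r y * y * (gamma_density s r (y*w) * (y*w+y) powr b)
           = (r powr k / Gamma k * y powr (k-1) * exp (- r * y)) * y * ((r powr s / Gamma s * (y powr (s-1) * w powr (s-1)) * exp (- r * (y*w))) * (y powr b * (1+w) powr b))"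
          unfolding gamma_density_def using True yw by (simp only: e1 e2 if_True)
        also have "\<dots> = (r powr k * r powr s / (Gamma s * Gamma k)) * (y powr (k-1) * y * y powr (s-1) * y powr b) * (exp (- r * y) * exp (- r * (y*w))) * (w powr (s-1) * (1+w) powr b)"
          using True wpos Gamma_real_pos[OF s] Gamma_real_pos[OF k] by (simp add: field_simps)
        also have "\<dots> = C0 * (w powr (s-1) * (1+w) powr b) * (y powr (s+k+b-1) * exp (-(r*(1+w))*y))"
          unfolding e3 e4 e5 C0_def by (simp only: mult_ac)
        finally have "gamma_density k r y * y * (gamma_density s r (y*w) * (y*w+y) powr b)
           = C0 * (w powr (s-1) * (1+w) powr b) * (y powr (s+k+b-1) * exp (-(r*(1+w))*y))" .
        moreover have "gamma_density s r (y*w) \<ge> 0" by (rule gamma_density_nonneg[OF s r])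
        moreover have "gamma_density k r y \<ge> 0" by (rule gamma_density_nonneg[OF k r])
        ultimately show ?thesis using True wpos
        proof -
          assume eq: "gamma_density k r y * y * (gamma_density s r (y*w) * (y*w+y) powr b)
           = C0 * (w powr (s-1) * (1+w) powr b) * (y powr (s+k+b-1) * exp (-(r*(1+w))*y))"
            and a2: "gamma_density s r (y*w) \<ge> 0" and a0: "gamma_density k r y \<ge> 0"
          have a1: "0 \<le> gamma_density k r y * y" using a0 True by simp
          have "ennreal (gamma_density k r y * y) * (ennreal (gamma_density s r (y*w)) * ennreal ((y*w+y) powr b))
              = ennreal (gamma_density k r y * y * (gamma_density s r (y*w) * (y*w+y) powr b))"
            by (simp only: ennreal_mult'[OF a1] ennreal_mult'[OF a2])
          then show ?thesis unfolding eq F_def using True wpos by simp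
        qed
      qed
    qed
    finally show ?thesis .
  qed
  have "(\<integral>\<^sup>+y. \<integral>\<^sup>+u. ennreal ((u+y) powr b) \<partial>gamma_measure s r \<partial>gamma_measure k r)
      = (\<integral>\<^sup>+y. ennreal (gamma_density k r y) * (\<integral>\<^sup>+u. ennreal ((u+y) powr b) \<partial>gamma_measure s r) \<partial>lborel)"
  proof (rule nn_integral_gamma)
    have "sets (borel \<Otimes>\<^sub>M gamma_measure s r) = sets (borel \<Otimes>\<^sub>M borel)"
      by (rule sets_pair_measure_cong) auto
    have "(\<lambda>y. \<integral>\<^sup>+u. ennreal ((u+y) powr b) \<partial>gamma_measure s r) =
          (\<lambda>y. \<integral>\<^sup>+u. ennreal (gamma_density s r u) * ennreal ((u+y) powr b) \<partial>lborel)"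
      by (intro ext nn_integral_gamma) measurable
    then show "(\<lambda>y. \<integral>\<^sup>+u. ennreal ((u+y) powr b) \<partial>gamma_measure s r) \<in> borel_measurable borel"
      by simp
  qed
  also have "\<dots> = (\<integral>\<^sup>+y. \<integral>\<^sup>+w. F y w \<partial>lborel \<partial>lborel)"
    by (simp add: inner)
  also have "\<dots> = (\<integral>\<^sup>+w. \<integral>\<^sup>+y. F y w \<partial>lborel \<partial>lborel)"
    by (rule lborel_pair.Fubini'[symmetric]) (rule Fm)
  also have "\<dots> = (\<integral>\<^sup>+w. ennreal (r powr (-b) * Gamma (s+k+b) / (Gamma s * Gamma k)) *
         ennreal (if w > 0 then w powr (s-1) * (1+w) powr (-(s+k)) else 0) \<partial>lborel)"
  proof (rule nn_integral_cong)
    fix w :: real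
    show "(\<integral>\<^sup>+y. F y w \<partial>lborel) = ennreal (r powr (-b) * Gamma (s+k+b) / (Gamma s * Gamma k)) *
         ennreal (if w > 0 then w powr (s-1) * (1+w) powr (-(s+k)) else 0)"
    proof (cases "w > 0")
      case False
      then show ?thesis by (simp add: F_def)
    next
      case True
      have rw: "r*(1+w) > 0" using r True by simp
      have "(\<integral>\<^sup>+y. F y w \<partial>lborel) = (\<integral>\<^sup>+y. ennreal (C0 * (w powr (s-1) * (1+w) powr b)) *
              ennreal (if y > 0 then y powr (s+k+b-1) * exp (-(r*(1+w))*y) else 0) \<partial>lborel)"
        unfolding F_def using True C0
        by (intro nn_integral_cong) (auto simp: ennreal_mult'[symmetric])
      also have "\<dots> = ennreal (C0 * (w powr (s-1) * (1+w) powr b)) * ennreal (Gamma (s+k+b) * (r*(1+w)) powr (-(s+k+b)))"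
        by (subst nn_integral_cmult) (auto simp: gamma_int[OF skb rw])
      also have "\<dots> = ennreal (r powr (-b) * Gamma (s+k+b) / (Gamma s * Gamma k)) *
           ennreal (w powr (s-1) * (1+w) powr (-(s+k)))"
      proof -
        have p1: "(r*(1+w)) powr (-(s+k+b)) = r powr (-(s+k+b)) * (1+w) powr (-(s+k+b))"
          using r True by (simp add: powr_mult)
        have p2: "(1+w) powr b * (1+w) powr (-(s+k+b)) = (1+w) powr (-(s+k))"
          by (simp add: powr_add[symmetric])
        have p3: "r powr (s+k) * r powr (-(s+k+b)) = r powr (-b)"
          by (simp add: powr_add[symmetric])
        have eqC: "C0 * (w powr (s-1) * (1+w) powr b) * (Gamma (s+k+b) * (r*(1+w)) powr (-(s+k+b)))
            = (r powr (-b) * Gamma (s+k+b) / (Gamma s * Gamma k)) * (w powr (s-1) * (1+w) powr (-(s+k)))"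
        proof -
          have "C0 * (w powr (s-1) * (1+w) powr b) * (Gamma (s+k+b) * (r*(1+w)) powr (-(s+k+b)))
             = (r powr (s+k) * r powr (-(s+k+b))) * Gamma (s+k+b) / (Gamma s * Gamma k) * (w powr (s-1) * ((1+w) powr b * (1+w) powr (-(s+k+b))))"
            unfolding p1 C0_def by (simp add: field_simps)
          then show ?thesis unfolding p2 p3 by simp
        qed
        moreover have nn: "0 \<le> r powr (-b) * Gamma (s+k+b) / (Gamma s * Gamma k)"
          using Gamma_real_pos[OF s] Gamma_real_pos[OF k] Gamma_real_pos[OF skb] by simp
        moreover have nn2: "0 \<le> C0 * (w powr (s-1) * (1+w) powr b)" using C0 by simp
        ultimately show ?thesis by (simp only: ennreal_mult'[OF nn, symmetric] ennreal_mult'[OF nn2, symmetric] eqC)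
      qed
      finally show ?thesis using True by simp
    qed
  qed
  also have "\<dots> = ennreal (r powr (-b) * Gamma (s+k+b) / (Gamma s * Gamma k)) *
         (\<integral>\<^sup>+w. ennreal (if w > 0 then w powr (s-1) * (1+w) powr (-(s+k)) else 0) \<partial>lborel)"
    by (rule nn_integral_cmult) measurable
  finally show ?thesis .
qed

lemma gamma_total:
  assumes s: "s > 0" and l: "l > 0"
  shows "(\<integral>\<^sup>+u. ennreal (gamma_density s l u) \<partial>lborel) = 1"
proof -
  interpret prob_space "gamma_measure s l" by (rule gamma_measure_prob[OF s l])
  have "emeasure (gamma_measure s l) UNIV = 1" using emeasure_space_1 by simp
  then show ?thesis unfolding gamma_measure_def by (simp add: emeasure_density)
qed

lemma meas_gamma_param:
  assumes [measurable]: "case_prod f \<in> borel_measurable (borel \<Otimes>\<^sub>M borel)"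
  shows "(\<lambda>y. \<integral>\<^sup>+g. f y g \<partial>gamma_measure s l) \<in> borel_measurable borel"
proof -
  have "(\<lambda>y. \<integral>\<^sup>+g. f y g \<partial>gamma_measure s l) = (\<lambda>y. \<integral>\<^sup>+g. ennreal (gamma_density s l g) * f y g \<partial>lborel)"
    by (intro ext nn_integral_gamma) measurable
  also have "\<dots> \<in> borel_measurable borel" by measurable
  finally show ?thesis .
qed

lemma conv_moment:
  fixes s k r b :: real
  assumes s: "s > 0" and k: "k > 0" and r: "r > 0" and skb: "s + k + b > 0"
  shows "(\<integral>\<^sup>+y. \<integral>\<^sup>+u. ennreal ((u+y) powr b) \<partial>gamma_measure s r \<partial>gamma_measure k r)
       = ennreal (r powr (-b) * Gamma (s+k+b) / Gamma (s+k))"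
proof -
  define I where "I = (\<integral>\<^sup>+w. ennreal (if w > 0 then w powr (s-1) * (1+w) powr (-(s+k)) else 0) \<partial>lborel)"
  have sk: "s + k + 0 > 0" using s k by simp
  have gs: "Gamma s > 0" "Gamma k > 0" "Gamma (s+k) > 0" using s k Gamma_real_pos by auto
  have one: "(\<integral>\<^sup>+y. \<integral>\<^sup>+u. ennreal ((u+y) powr 0) \<partial>gamma_measure s r \<partial>gamma_measure k r) = 1"
  proof -
    have "(\<integral>\<^sup>+y. \<integral>\<^sup>+u. ennreal ((u+y) powr 0) \<partial>gamma_measure s r \<partial>gamma_measure k r)
        = (\<integral>\<^sup>+y. ennreal (gamma_density k r y) * (\<integral>\<^sup>+u. ennreal ((u+y) powr 0) \<partial>gamma_measure s r) \<partial>lborel)"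
      by (rule nn_integral_gamma, rule meas_gamma_param) measurable
    also have "\<dots> = (\<integral>\<^sup>+y. ennreal (gamma_density k r y) \<partial>lborel)"
    proof (rule nn_integral_cong)
      fix y :: real
      show "ennreal (gamma_density k r y) * (\<integral>\<^sup>+u. ennreal ((u+y) powr 0) \<partial>gamma_measure s r) = ennreal (gamma_density k r y)"
      proof (cases "y > 0")
        case False then show ?thesis by (simp add: gamma_density_def)
      next
        case True
        have "(\<integral>\<^sup>+u. ennreal ((u+y) powr 0) \<partial>gamma_measure s r) = (\<integral>\<^sup>+u. ennreal (gamma_density s r u) * ennreal ((u+y) powr 0) \<partial>lborel)"
          by (rule nn_integral_gamma) measurable
        also have "\<dots> = (\<integral>\<^sup>+u. ennreal (gamma_density s r u) \<partial>lborel)"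
          by (rule nn_integral_cong) (use True in \<open>auto simp: gamma_density_def\<close>)
        also have "\<dots> = 1" by (rule gamma_total[OF s r])
        finally show ?thesis by simp
      qed
    qed
    also have "\<dots> = 1" by (rule gamma_total[OF k r])
    finally show ?thesis .
  qed
  have "1 = ennreal (r powr (-0) * Gamma (s+k+0) / (Gamma s * Gamma k)) * I"
    using one conv_aux[OF s k r sk] unfolding I_def by simp
  also have "r powr (-0) * Gamma (s+k+0) / (Gamma s * Gamma k) = Gamma (s+k) / (Gamma s * Gamma k)"
    using r by simp
  finally have I1: "1 = ennreal (Gamma (s+k) / (Gamma s * Gamma k)) * I" .
  have "I = ennreal (Gamma s * Gamma k / Gamma (s+k)) * ennreal (Gamma (s+k) / (Gamma s * Gamma k)) * I"
    using gs by (simp add: ennreal_mult'[symmetric])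
  also have "\<dots> = ennreal (Gamma s * Gamma k / Gamma (s+k))"
    using I1 by (simp add: mult.assoc)
  finally have I2: "I = ennreal (Gamma s * Gamma k / Gamma (s+k))" .
  have "(\<integral>\<^sup>+y. \<integral>\<^sup>+u. ennreal ((u+y) powr b) \<partial>gamma_measure s r \<partial>gamma_measure k r)
     = ennreal (r powr (-b) * Gamma (s+k+b) / (Gamma s * Gamma k)) * ennreal (Gamma s * Gamma k / Gamma (s+k))"
    using conv_aux[OF s k r skb] I2 unfolding I_def by simp
  also have "\<dots> = ennreal (r powr (-b) * Gamma (s+k+b) / (Gamma s * Gamma k) * (Gamma s * Gamma k / Gamma (s+k)))"
    using gs Gamma_real_pos[OF skb] by (subst ennreal_mult') auto
  also have "r powr (-b) * Gamma (s+k+b) / (Gamma s * Gamma k) * (Gamma s * Gamma k / Gamma (s+k))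
     = r powr (-b) * Gamma (s+k+b) / Gamma (s+k)" using gs by simp
  finally show ?thesis .
qed

definition Ykern :: "real \<Rightarrow> real \<Rightarrow> nat \<Rightarrow> real measure" where
  "Ykern lam \<tau> k = (if k = 0 then return borel 0 else gamma_measure (real k) (lam * \<tau> / (1 - \<tau>)))"

lemma path_moment:
  fixes \<alpha> lam \<tau> b :: real
  assumes a: "\<alpha> > 0" and l: "lam > 0" and t0: "0 < \<tau>" and t1: "\<tau> < 1" and ab: "\<alpha> + b > 0"
  shows "(\<integral>\<^sup>+y. \<integral>\<^sup>+g. ennreal (((1-\<tau>)*g + \<tau>*y) powr b) \<partial>gamma_measure \<alpha> lam \<partial>Ykern lam \<tau> k)
     = ennreal ((lam/(1-\<tau>)) powr (-b) * Gamma (\<alpha> + real k + b) / Gamma (\<alpha> + real k))"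
proof -
  have c1: "1 - \<tau> > 0" using t1 by simp
  have rr: "lam/(1-\<tau>) > 0" using l c1 by simp
  have inner: "(\<integral>\<^sup>+g. ennreal (((1-\<tau>)*g + \<tau>*y) powr b) \<partial>gamma_measure \<alpha> lam)
      = (\<integral>\<^sup>+u. ennreal ((u + \<tau>*y) powr b) \<partial>gamma_measure \<alpha> (lam/(1-\<tau>)))" for y
    using gamma_measure_scale[OF c1 a l, of "\<lambda>u. ennreal ((u + \<tau>*y) powr b)"] by simp
  show ?thesis
  proof (cases "k = 0")
    case True
    have "(\<integral>\<^sup>+y. \<integral>\<^sup>+g. ennreal (((1-\<tau>)*g + \<tau>*y) powr b) \<partial>gamma_measure \<alpha> lam \<partial>Ykern lam \<tau> k)
       = (\<integral>\<^sup>+g. ennreal (((1-\<tau>)*g + \<tau>*0) powr b) \<partial>gamma_measure \<alpha> lam)"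
    proof -
      have yk: "Ykern lam \<tau> k = return borel 0" using True by (simp add: Ykern_def)
      show ?thesis unfolding yk by (subst nn_integral_return) (auto intro!: meas_gamma_param)
    qed
    also have "\<dots> = (\<integral>\<^sup>+u. ennreal (u powr b) \<partial>gamma_measure \<alpha> (lam/(1-\<tau>)))"
      using inner[of 0] by simp
    also have "\<dots> = ennreal ((lam/(1-\<tau>)) powr (-b) * Gamma (\<alpha> + b) / Gamma \<alpha>)"
      by (rule gamma_moment[OF a rr ab])
    finally show ?thesis using True by simp
  next
    case False
    have k: "real k > 0" using False by simp
    have "(\<integral>\<^sup>+y. \<integral>\<^sup>+g. ennreal (((1-\<tau>)*g + \<tau>*y) powr b) \<partial>gamma_measure \<alpha> lam \<partial>Ykern lam \<tau> k)
       = (\<integral>\<^sup>+y. (\<lambda>z. \<integral>\<^sup>+u. ennreal ((u + z) powr b) \<partial>gamma_measure \<alpha> (lam/(1-\<tau>))) (\<tau>*y) \<partial>gamma_measure (real k) (lam * \<tau> / (1 - \<tau>)))"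
      unfolding Ykern_def using False inner by simp
    also have "\<dots> = (\<integral>\<^sup>+y. (\<lambda>z. \<integral>\<^sup>+u. ennreal ((u + z) powr b) \<partial>gamma_measure \<alpha> (lam/(1-\<tau>))) y \<partial>gamma_measure (real k) (lam * \<tau> / (1 - \<tau>) / \<tau>))"
      by (rule gamma_measure_scale[OF t0 k]) (use l c1 t0 in \<open>auto intro!: meas_gamma_param\<close>)
    also have "lam * \<tau> / (1 - \<tau>) / \<tau> = lam / (1-\<tau>)" using t0 by simp
    also have "(\<integral>\<^sup>+y. (\<lambda>z. \<integral>\<^sup>+u. ennreal ((u + z) powr b) \<partial>gamma_measure \<alpha> (lam/(1-\<tau>))) y \<partial>gamma_measure (real k) (lam / (1-\<tau>)))
        = ennreal ((lam/(1-\<tau>)) powr (-b) * Gamma (\<alpha> + real k + b) / Gamma (\<alpha> + real k))"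
      using conv_moment[OF a k rr] ab k by simp
    finally show ?thesis .
  qed
qed

lemma bind_modify:
  assumes g: "g \<in> measurable M (subprob_algebra B)" and ne: "space M \<noteq> {}"
    and Z: "Z \<in> null_sets M"
    and fg: "\<And>x. x \<in> space M - Z \<Longrightarrow> f x = g x"
    and fZ: "\<And>x. x \<in> Z \<Longrightarrow> f x \<notin> space (subprob_algebra B)"
    and sf: "\<And>x. x \<in> space M \<Longrightarrow> sets (f x) = sets B"
  shows "bind M f = bind M g"
proof -
  let ?x = "SOME x. x \<in> space M"
  have x: "?x \<in> space M" using ne by (simp add: some_in_eq)
  have "bind M f = join (distr M (subprob_algebra (f ?x)) f)" by (rule bind_nonempty[OF ne])
  also have "subprob_algebra (f ?x) = subprob_algebra B" by (rule subprob_algebra_cong) (rule sf[OF x])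
  also have "distr M (subprob_algebra B) f = distr M (subprob_algebra B) g"
    unfolding distr_def
  proof (rule measure_of_eq)
    show "sets (subprob_algebra B) \<subseteq> Pow (space (subprob_algebra B))"
      by (rule sets.space_closed)
  next
    fix A assume "A \<in> sigma_sets (space (subprob_algebra B)) (sets (subprob_algebra B))"
    then have A: "A \<in> sets (subprob_algebra B)" by (simp add: sets.sigma_sets_eq)
    have Asub: "A \<subseteq> space (subprob_algebra B)" using sets.sets_into_space[OF A] .
    have gA: "g -` A \<inter> space M \<in> sets M" using measurable_sets[OF g A] .
    have "f -` A \<inter> space M = (g -` A \<inter> space M) - Z"
    proof (intro set_eqI iffI)
      fix x assume x: "x \<in> f -` A \<inter> space M"
      then have "x \<notin> Z" using fZ Asub by blast
      then show "x \<in> (g -` A \<inter> space M) - Z" using x fg by auto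
    next
      fix x assume x: "x \<in> (g -` A \<inter> space M) - Z"
      then show "x \<in> f -` A \<inter> space M" using fg by auto
    qed
    then show "emeasure M (f -` A \<inter> space M) = emeasure M (g -` A \<inter> space M)"
      using emeasure_Diff_null_set[OF Z gA] by simp
  qed
  also have "join (distr M (subprob_algebra B) g) = bind M g"
    by (rule bind_nonempty''[OF g ne, symmetric])
  finally show ?thesis .
qed

lemma sets_poisson[simp, measurable_cong]: "sets (poisson_measure r) = sets (count_space UNIV)"
  by (simp add: poisson_measure_def)

lemma space_poisson[simp]: "space (poisson_measure r) = UNIV"
  by (simp add: poisson_measure_def)

lemma nn_integral_poisson:
  "(\<integral>\<^sup>+k. f k \<partial>poisson_measure r) = (\<Sum>k. ennreal (r ^ k / fact k * exp (- r)) * f k)"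
  unfolding poisson_measure_def
  by (subst nn_integral_density) (auto simp: nn_integral_count_space_nat)

lemma poisson_sums: "(\<lambda>k. (r::real) ^ k / fact k * exp (- r)) sums 1"
proof -
  have "(\<lambda>k. r ^ k / fact k) sums exp r"
    using exp_converges[of r] by (simp add: field_simps)
  from sums_mult2[OF this, of "exp (-r)"] show ?thesis by (simp add: exp_minus)
qed

lemma poisson_prob:
  assumes r: "r \<ge> 0" shows "prob_space (poisson_measure r)"
proof
  have "emeasure (poisson_measure r) (space (poisson_measure r)) = (\<Sum>k. ennreal (r ^ k / fact k * exp (- r)))"
    unfolding poisson_measure_def by (subst emeasure_density) (auto simp: nn_integral_count_space_nat)
  also have "\<dots> = ennreal 1"
    by (rule suminf_ennreal_eq[OF _ poisson_sums]) (use r in simp)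
  finally show "emeasure (poisson_measure r) (space (poisson_measure r)) = 1" by simp
qed

lemma poisson_neg:
  assumes r: "r < 0" shows "emeasure (poisson_measure r) UNIV > 1"
proof -
  have "emeasure (poisson_measure r) UNIV = (\<Sum>k. ennreal (r ^ k / fact k * exp (- r)))"
    unfolding poisson_measure_def by (subst emeasure_density) (auto simp: nn_integral_count_space_nat)
  moreover have "(\<Sum>k<1. ennreal (r ^ k / fact k * exp (- r))) \<le> (\<Sum>k. ennreal (r ^ k / fact k * exp (- r)))"
    by (rule sum_le_suminf[OF summableI]) simp_all
  ultimately have ge: "ennreal (exp (-r)) \<le> emeasure (poisson_measure r) UNIV" by simp
  have "exp (-r) > 1" using r by simp
  then have "ennreal 1 < ennreal (exp (-r))" by (subst ennreal_less_iff) auto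
  then show ?thesis using less_le_trans[OF _ ge] by simp
qed

lemma poisson_measurable:
  assumes f[measurable]: "f \<in> borel_measurable M" and nn: "\<And>x. x \<in> space M \<Longrightarrow> f x \<ge> 0"
  shows "(\<lambda>x. poisson_measure (f x)) \<in> M \<rightarrow>\<^sub>M subprob_algebra (count_space UNIV)"
proof (rule measurable_subprob_algebra)
  fix a assume "a \<in> space M"
  then show "subprob_space (poisson_measure (f a))"
    using poisson_prob[OF nn] prob_space_imp_subprob_space by blast
next
  fix a show "sets (poisson_measure (f a)) = sets (count_space UNIV)" by simp
next
  fix A :: "nat set" assume "A \<in> sets (count_space UNIV)"
  have "(\<lambda>a. emeasure (poisson_measure (f a)) A) =
        (\<lambda>a. \<Sum>k. ennreal (f a ^ k / fact k * exp (- f a)) * indicator A k)"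
    unfolding poisson_measure_def
    by (subst emeasure_density) (auto simp: nn_integral_count_space_nat)
  also have "\<dots> \<in> borel_measurable M" by measurable
  finally show "(\<lambda>a. emeasure (poisson_measure (f a)) A) \<in> borel_measurable M" .
qed

definition Gk :: "real \<Rightarrow> real \<Rightarrow> real \<Rightarrow> real \<Rightarrow> real measure" where
  "Gk \<alpha> lam \<tau> y = gamma_measure \<alpha> lam \<bind> (\<lambda>g. return borel ((1 - \<tau>) * g + \<tau> * y))"

definition Kk :: "real \<Rightarrow> real \<Rightarrow> real \<Rightarrow> nat \<Rightarrow> real measure" where
  "Kk \<alpha> lam \<tau> k = Ykern lam \<tau> k \<bind> Gk \<alpha> lam \<tau>"

lemma smart_eq:
  "smart_path_law \<alpha> lam \<tau> PX = PX \<bind> (\<lambda>x. poisson_measure (lam * \<tau> * x / (1 - \<tau>)) \<bind> Kk \<alpha> lam \<tau>)"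
  unfolding smart_path_law_def Kk_def Gk_def Ykern_def ..

context
  fixes \<alpha> lam \<tau> :: real
  assumes a: "\<alpha> > 0" and l: "lam > 0" and t0: "0 < \<tau>" and t1: "\<tau> < 1"
begin

lemma GM: "gamma_measure \<alpha> lam \<in> space (subprob_algebra borel)"
  using gamma_measure_prob[OF a l] by (simp add: space_subprob_algebra prob_space_imp_subprob_space)

lemma Gk_meas: "Gk \<alpha> lam \<tau> \<in> borel \<rightarrow>\<^sub>M subprob_algebra borel"
  unfolding Gk_def[abs_def]
  apply (rule measurable_bind[OF measurable_const[OF GM]])
  apply (rule measurable_compose[OF _ return_measurable])
  apply measurable
  done

lemma Gk_prob: "prob_space (Gk \<alpha> lam \<tau> y)"
proof -
  interpret prob_space "gamma_measure \<alpha> lam" by (rule gamma_measure_prob[OF a l])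
  show ?thesis unfolding Gk_def
  proof (rule prob_space_bind[where S=borel])
    show "AE x in gamma_measure \<alpha> lam. prob_space (return borel ((1 - \<tau>) * x + \<tau> * y))"
      by (auto intro!: prob_space_return)
    show "(\<lambda>g. return borel ((1 - \<tau>) * g + \<tau> * y)) \<in> gamma_measure \<alpha> lam \<rightarrow>\<^sub>M subprob_algebra borel"
      by (rule measurable_compose[OF _ return_measurable]) measurable
  qed
qed

lemma Ykern_space: "Ykern lam \<tau> k \<in> space (subprob_algebra borel)"
proof (cases "k = 0")
  case True
  then show ?thesis by (simp add: Ykern_def space_subprob_algebra subprob_space_return)
next
  case False
  have "lam * \<tau> / (1 - \<tau>) > 0" using l t0 t1 by simp
  then show ?thesis using False gamma_measure_prob[of "real k"]
    by (simp add: Ykern_def space_subprob_algebra prob_space_imp_subprob_space)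
qed

lemma Ykern_prob: "prob_space (Ykern lam \<tau> k)"
proof (cases "k = 0")
  case True
  then show ?thesis by (simp add: Ykern_def prob_space_return)
next
  case False
  have "lam * \<tau> / (1 - \<tau>) > 0" using l t0 t1 by simp
  then show ?thesis using False gamma_measure_prob[of "real k"]
    by (simp add: Ykern_def)
qed

lemma Kk_space: "Kk \<alpha> lam \<tau> k \<in> space (subprob_algebra borel)"
  unfolding Kk_def
  using measurable_space[OF measurable_bind2[OF measurable_const[OF Ykern_space] Gk_meas], of undefined "count_space UNIV"]
  by simp

lemma Kk_meas: "Kk \<alpha> lam \<tau> \<in> count_space UNIV \<rightarrow>\<^sub>M subprob_algebra borel"
  using Kk_space by simp

lemma Kk_prob: "prob_space (Kk \<alpha> lam \<tau> k)"
proof -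
  interpret prob_space "Ykern lam \<tau> k" by (rule Ykern_prob)
  have s: "sets (Ykern lam \<tau> k) = sets borel" using Ykern_space by (simp add: space_subprob_algebra)
  show ?thesis unfolding Kk_def
    by (rule prob_space_bind[where S=borel]) (auto intro!: Gk_prob simp: measurable_cong_sets[OF s refl] Gk_meas)
qed

end

context
  fixes \<alpha> lam \<tau> :: real
  assumes a: "\<alpha> > 0" and l: "lam > 0" and t0: "0 < \<tau>" and t1: "\<tau> < 1"
begin

definition "Np x = poisson_measure (lam * \<tau> * max x 0 / (1 - \<tau>)) \<bind> Kk \<alpha> lam \<tau>"

lemma Np_meas: "Np \<in> borel \<rightarrow>\<^sub>M subprob_algebra borel"
  unfolding Np_def[abs_def]
proof (rule measurable_bind2[OF poisson_measurable Kk_meas[OF a l t0 t1]])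
  show "(\<lambda>x. lam * \<tau> * max x 0 / (1 - \<tau>)) \<in> borel_measurable borel" by measurable
  show "\<And>x. x \<in> space borel \<Longrightarrow> 0 \<le> lam * \<tau> * max x 0 / (1 - \<tau>)" using l t0 t1 by auto
qed

lemma Kk_measP: "Kk \<alpha> lam \<tau> \<in> poisson_measure r \<rightarrow>\<^sub>M subprob_algebra borel"
  using Kk_meas[OF a l t0 t1] by (simp add: measurable_cong_sets[OF sets_poisson refl])

lemma Kk_UNIV: "emeasure (Kk \<alpha> lam \<tau> k) UNIV = 1"
proof -
  interpret prob_space "Kk \<alpha> lam \<tau> k" by (rule Kk_prob[OF a l t0 t1])
  have "space (Kk \<alpha> lam \<tau> k) = UNIV"
    using Kk_space[OF a l t0 t1, of k] by (simp add: space_subprob_algebra sets_eq_imp_space_eq)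
  then show ?thesis using emeasure_space_1 by simp
qed

lemma N_bad:
  assumes x: "x < 0"
  shows "poisson_measure (lam * \<tau> * x / (1 - \<tau>)) \<bind> Kk \<alpha> lam \<tau> \<notin> space (subprob_algebra borel)"
proof
  let ?P = "poisson_measure (lam * \<tau> * x / (1 - \<tau>))"
  assume A: "?P \<bind> Kk \<alpha> lam \<tau> \<in> space (subprob_algebra borel)"
  then interpret subprob_space "?P \<bind> Kk \<alpha> lam \<tau>" by (simp add: space_subprob_algebra)
  have sp: "space (?P \<bind> Kk \<alpha> lam \<tau>) = UNIV" using A by (simp add: space_subprob_algebra sets_eq_imp_space_eq)
  have "emeasure (?P \<bind> Kk \<alpha> lam \<tau>) UNIV = (\<integral>\<^sup>+k. emeasure (Kk \<alpha> lam \<tau> k) UNIV \<partial>?P)"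
    by (rule emeasure_bind[OF _ Kk_measP]) auto
  also have "\<dots> = (\<integral>\<^sup>+k. 1 \<partial>?P)" by (simp add: Kk_UNIV)
  also have "\<dots> = emeasure ?P UNIV" by simp
  moreover have "lam * \<tau> * x / (1 - \<tau>) < 0"
    using x l t0 t1 by (simp add: divide_neg_pos mult_pos_neg)
  ultimately have "emeasure (?P \<bind> Kk \<alpha> lam \<tau>) UNIV > 1"
    using poisson_neg[of "lam * \<tau> * x / (1 - \<tau>)"] by simp
  moreover have "emeasure (?P \<bind> Kk \<alpha> lam \<tau>) UNIV \<le> 1" using subprob_emeasure_le_1 by simp
  ultimately show False by simp
qed

lemma PX_eq:
  fixes M :: "'a measure" and X :: "'a \<Rightarrow> real"
  assumes "prob_space M" and Xm: "X \<in> borel_measurable M" and Xp: "\<forall>\<omega>\<in>space M. X \<omega> > 0"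
  shows "smart_path_law \<alpha> lam \<tau> (distr M borel X) = distr M borel X \<bind> Np"
  unfolding smart_eq
proof (rule bind_modify[where Z="{x. x < 0}"])
  show "Np \<in> distr M borel X \<rightarrow>\<^sub>M subprob_algebra borel"
    using Np_meas by (simp add: measurable_cong_sets[OF sets_distr refl])
next
  show "space (distr M borel X) \<noteq> {}" by simp
  have "emeasure (distr M borel X) {x. x < 0} = emeasure M (X -` {x. x < 0} \<inter> space M)"
    by (rule emeasure_distr[OF Xm]) simp
  also have "X -` {x. x < 0} \<inter> space M = {}" using Xp by force
  finally show "{x. x < 0} \<in> null_sets (distr M borel X)" by (simp add: null_sets_def)
next
  fix x assume "x \<in> space (distr M borel X) - {x. x < 0}"
  then have "max x 0 = x" by auto
  then show "poisson_measure (lam * \<tau> * x / (1 - \<tau>)) \<bind> Kk \<alpha> lam \<tau> = Np x"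
    unfolding Np_def by simp
next
  fix x :: real assume "x \<in> {x. x < 0}"
  then show "poisson_measure (lam * \<tau> * x / (1 - \<tau>)) \<bind> Kk \<alpha> lam \<tau> \<notin> space (subprob_algebra borel)"
    using N_bad by simp
next
  fix x :: real
  show "sets (poisson_measure (lam * \<tau> * x / (1 - \<tau>)) \<bind> Kk \<alpha> lam \<tau>) = sets borel"
    by (rule sets_bind[OF sets_kernel[OF Kk_meas[OF a l t0 t1]]]) auto
qed

lemma Kk_moment:
  assumes ab: "\<alpha> + b > 0"
  shows "(\<integral>\<^sup>+u. ennreal (u powr b) \<partial>Kk \<alpha> lam \<tau> k)
     = ennreal ((lam/(1-\<tau>)) powr (-b) * Gamma (\<alpha> + real k + b) / Gamma (\<alpha> + real k))"
proof -
  have s: "sets (Ykern lam \<tau> k) = sets borel"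
    using Ykern_space[OF a l t0 t1, of k] by (simp add: space_subprob_algebra)
  have Gm: "Gk \<alpha> lam \<tau> \<in> Ykern lam \<tau> k \<rightarrow>\<^sub>M subprob_algebra borel"
    by (simp add: measurable_cong_sets[OF s refl] Gk_meas[OF a l t0 t1])
  have ret: "(\<lambda>g. return borel ((1 - \<tau>) * g + \<tau> * y)) \<in> gamma_measure \<alpha> lam \<rightarrow>\<^sub>M subprob_algebra borel" for y
    by (rule measurable_compose[OF _ return_measurable]) measurable
  have "(\<integral>\<^sup>+u. ennreal (u powr b) \<partial>Kk \<alpha> lam \<tau> k)
      = (\<integral>\<^sup>+y. \<integral>\<^sup>+u. ennreal (u powr b) \<partial>Gk \<alpha> lam \<tau> y \<partial>Ykern lam \<tau> k)"
    unfolding Kk_def by (rule nn_integral_bind[OF _ Gm]) measurable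
  also have "\<dots> = (\<integral>\<^sup>+y. \<integral>\<^sup>+g. ennreal (((1-\<tau>)*g + \<tau>*y) powr b) \<partial>gamma_measure \<alpha> lam \<partial>Ykern lam \<tau> k)"
  proof (rule nn_integral_cong)
    fix y
    have "(\<integral>\<^sup>+u. ennreal (u powr b) \<partial>Gk \<alpha> lam \<tau> y)
        = (\<integral>\<^sup>+g. \<integral>\<^sup>+u. ennreal (u powr b) \<partial>return borel ((1 - \<tau>) * g + \<tau> * y) \<partial>gamma_measure \<alpha> lam)"
      unfolding Gk_def by (rule nn_integral_bind[OF _ ret]) measurable
    also have "\<dots> = (\<integral>\<^sup>+g. ennreal (((1-\<tau>)*g + \<tau>*y) powr b) \<partial>gamma_measure \<alpha> lam)"
      by (intro nn_integral_cong nn_integral_return) auto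
    finally show "(\<integral>\<^sup>+u. ennreal (u powr b) \<partial>Gk \<alpha> lam \<tau> y) = \<dots>" .
  qed
  also have "\<dots> = ennreal ((lam/(1-\<tau>)) powr (-b) * Gamma (\<alpha> + real k + b) / Gamma (\<alpha> + real k))"
    by (rule path_moment[OF a l t0 t1 ab])
  finally show ?thesis .
qed

lemma Np_moment:
  assumes ab: "\<alpha> + b > 0"
  shows "(\<integral>\<^sup>+u. ennreal (u powr b) \<partial>Np x)
     = (\<Sum>k. ennreal ((lam * \<tau> * max x 0 / (1 - \<tau>)) ^ k / fact k * exp (- (lam * \<tau> * max x 0 / (1 - \<tau>)))) *
            ennreal ((lam/(1-\<tau>)) powr (-b) * Gamma (\<alpha> + real k + b) / Gamma (\<alpha> + real k)))"
  unfolding Np_def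
  by (subst nn_integral_bind[OF _ Kk_measP]) (auto simp: Kk_moment[OF ab] nn_integral_poisson)

end

lemma young_pow:
  fixes u t b :: real and q :: nat
  assumes u: "u \<ge> 0" and t: "t > 0" and b: "0 \<le> b" "b \<le> real q"
  shows "u powr b \<le> t powr b + t powr b / t ^ q * u ^ q"
proof (cases "u \<le> t")
  case True
  have "u powr b \<le> t powr b" using True u b by (intro powr_mono2) auto
  moreover have "0 \<le> t powr b / t ^ q * u ^ q" using t u by simp
  ultimately show ?thesis by linarith
next
  case False
  then have ut: "u / t \<ge> 1" using t by simp
  have "(u/t) powr b \<le> (u/t) powr real q" by (rule powr_mono[OF b(2) ut])
  also have "\<dots> = (u/t) ^ q" using ut by (simp add: powr_realpow)
  finally have "t powr b * (u/t) powr b \<le> t powr b * (u/t) ^ q" by (simp add: mult_left_mono)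
  moreover have "t powr b * (u/t) powr b = u powr b" using t u by (simp add: powr_divide)
  moreover have "t powr b * (u/t) ^ q = t powr b / t ^ q * u ^ q" by (simp add: power_divide)
  moreover have "0 \<le> t powr b" by simp
  ultimately show ?thesis by linarith
qed

lemma poch_le:
  fixes s :: real assumes s: "s \<ge> 0"
  shows "pochhammer s q \<le> (s + real q) ^ q"
proof -
  have "pochhammer s q = (\<Prod>i\<in>{0..<q}. s + real i)" by (simp add: pochhammer_prod)
  also have "\<dots> \<le> (\<Prod>i\<in>{0..<q}. s + real q)" by (rule prod_mono) (use s in auto)
  also have "\<dots> = (s + real q) ^ q" by simp
  finally show ?thesis .
qed

lemma gamma_ratio_bound:
  fixes s b :: real and q :: nat
  assumes s: "s > 0" and b: "0 \<le> b" "b \<le> real q"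
  shows "Gamma (s + b) / Gamma s \<le> 2 * (s + real q) powr b"
proof -
  define t where "t = s + real q"
  have t: "t > 0" using s by (simp add: t_def)
  have sb: "s + b > 0" using s b by simp
  have sq: "s + real q > 0" using s by simp
  have "ennreal (Gamma (s + b) / Gamma s) = (\<integral>\<^sup>+u. ennreal (u powr b) \<partial>gamma_measure s 1)"
    using gamma_moment[OF s _ sb, of 1] by simp
  also have "\<dots> = (\<integral>\<^sup>+u. ennreal (gamma_density s 1 u) * ennreal (u powr b) \<partial>lborel)"
    by (rule nn_integral_gamma) measurable
  also have "\<dots> \<le> (\<integral>\<^sup>+u. ennreal (gamma_density s 1 u) * (ennreal (t powr b) + ennreal (t powr b / t ^ q) * ennreal (u powr real q)) \<partial>lborel)"
  proof (rule nn_integral_mono)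
    fix u :: real
    show "ennreal (gamma_density s 1 u) * ennreal (u powr b) \<le> ennreal (gamma_density s 1 u) * (ennreal (t powr b) + ennreal (t powr b / t ^ q) * ennreal (u powr real q))"
    proof (cases "u > 0")
      case False then show ?thesis by (simp add: gamma_density_def)
    next
      case True
      have "u powr b \<le> t powr b + t powr b / t ^ q * u powr real q"
        using young_pow[OF _ t b, of u] True by (simp add: powr_realpow)
      then have "ennreal (u powr b) \<le> ennreal (t powr b) + ennreal (t powr b / t ^ q) * ennreal (u powr real q)"
        using t by (simp add: ennreal_plus[symmetric] ennreal_mult'[symmetric] del: ennreal_plus)
      then show ?thesis by (rule mult_left_mono) simp
    qed
  qed
  also have "\<dots> = (\<integral>\<^sup>+u. ennreal (t powr b) * ennreal (gamma_density s 1 u) + ennreal (t powr b / t ^ q) * (ennreal (gamma_density s 1 u) * ennreal (u powr real q)) \<partial>lborel)"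
    by (rule nn_integral_cong) (simp add: algebra_simps)
  also have "\<dots> = ennreal (t powr b) * (\<integral>\<^sup>+u. ennreal (gamma_density s 1 u) \<partial>lborel) + ennreal (t powr b / t ^ q) * (\<integral>\<^sup>+u. ennreal (gamma_density s 1 u) * ennreal (u powr real q) \<partial>lborel)"
    by (subst nn_integral_add) (auto simp: nn_integral_cmult)
  also have "(\<integral>\<^sup>+u. ennreal (gamma_density s 1 u) \<partial>lborel) = 1" by (rule gamma_total[OF s]) simp
  also have "(\<integral>\<^sup>+u. ennreal (gamma_density s 1 u) * ennreal (u powr real q) \<partial>lborel) = (\<integral>\<^sup>+u. ennreal (u powr real q) \<partial>gamma_measure s 1)"
    by (rule nn_integral_gamma[symmetric]) measurable
  also have "\<dots> = ennreal (Gamma (s + real q) / Gamma s)"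
    using gamma_moment[OF s _ sq, of 1] by simp
  also have "Gamma (s + real q) / Gamma s = pochhammer s q"
    using pochhammer_Gamma[of s q] s by (simp add: nonpos_Ints_def)
  finally have le: "ennreal (Gamma (s + b) / Gamma s) \<le> ennreal (t powr b) * 1 + ennreal (t powr b / t ^ q) * ennreal (pochhammer s q)" .
  have "pochhammer s q \<le> t ^ q" unfolding t_def by (rule poch_le) (use s in simp)
  then have "t powr b / t ^ q * pochhammer s q \<le> t powr b / t ^ q * t ^ q"
    by (intro mult_left_mono) (use t in auto)
  also have "\<dots> = t powr b" using t by simp
  finally have "t powr b + t powr b / t ^ q * pochhammer s q \<le> 2 * t powr b" by simp
  moreover have "0 \<le> pochhammer s q" using s by (simp add: pochhammer_nonneg)
  ultimately have "ennreal (Gamma (s + b) / Gamma s) \<le> ennreal (2 * t powr b)"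
    using le t by (simp add: ennreal_plus[symmetric] ennreal_mult'[symmetric] del: ennreal_plus)
  then show ?thesis unfolding t_def using s by (simp add: ennreal_le_iff)
qed

definition pp :: "real \<Rightarrow> nat \<Rightarrow> real" where "pp m k = m ^ k / fact k * exp (- m)"

lemma pp_nonneg: "m \<ge> 0 \<Longrightarrow> pp m k \<ge> 0" by (simp add: pp_def)

lemma pp_Suc: "real (Suc j) * pp m (Suc j) = m * pp m j"
proof -
  have f: "(fact (Suc j) :: real) = real (Suc j) * fact j" by simp
  have "real (Suc j) * pp m (Suc j) = real (Suc j) * (m * m ^ j / (real (Suc j) * fact j) * exp (- m))"
    unfolding pp_def f by simp
  also have "\<dots> = m * pp m j" unfolding pp_def by (simp del: of_nat_Suc)
  finally show ?thesis .
qed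

lemma pp_sum: "m \<ge> 0 \<Longrightarrow> (\<Sum>k. ennreal (pp m k)) = 1"
  unfolding pp_def by (subst suminf_ennreal_eq[OF _ poisson_sums[of m]]) auto

lemma poisson_pow_moment:
  fixes m :: real assumes m: "m \<ge> 0"
  shows "c \<ge> 0 \<Longrightarrow> (\<Sum>k. ennreal (pp m k * (real k + c) ^ q)) \<le> ennreal ((m + c + real q) ^ q)"
proof (induction q arbitrary: c)
  case 0
  then show ?case using pp_sum[OF m] by simp
next
  case (Suc q)
  have c: "c \<ge> 0" by fact
  have split: "ennreal (pp m k * (real k + c) ^ Suc q) =
     ennreal c * ennreal (pp m k * (real k + c) ^ q) + ennreal (real k * pp m k * (real k + c) ^ q)" for k
  proof -
    have e: "pp m k * (real k + c) ^ Suc q = c * (pp m k * (real k + c) ^ q) + real k * pp m k * (real k + c) ^ q"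
      by (simp add: algebra_simps)
    have h1: "0 \<le> c * (pp m k * (real k + c) ^ q)" and h2: "0 \<le> real k * pp m k * (real k + c) ^ q"
      and h3: "0 \<le> pp m k * (real k + c) ^ q"
      using c pp_nonneg[OF m, of k] by auto
    show ?thesis by (simp only: e ennreal_plus[OF h1 h2] ennreal_mult[OF c h3])
  qed
  have "(\<Sum>k. ennreal (pp m k * (real k + c) ^ Suc q))
      = (\<Sum>k. ennreal c * ennreal (pp m k * (real k + c) ^ q)) + (\<Sum>k. ennreal (real k * pp m k * (real k + c) ^ q))"
    unfolding split by (rule suminf_add[symmetric]) (auto intro: summableI)
  also have "(\<Sum>k. ennreal c * ennreal (pp m k * (real k + c) ^ q)) = ennreal c * (\<Sum>k. ennreal (pp m k * (real k + c) ^ q))"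
    by simp
  also have "(\<Sum>k. ennreal (real k * pp m k * (real k + c) ^ q))
      = (\<Sum>j. ennreal (real (j + 1) * pp m (j + 1) * (real (j + 1) + c) ^ q)) + (\<Sum>j<1. ennreal (real j * pp m j * (real j + c) ^ q))"
    by (rule suminf_offset) (auto intro: summableI)
  also have "(\<Sum>j<1. ennreal (real j * pp m j * (real j + c) ^ q)) = 0" by simp
  also have "(\<Sum>j. ennreal (real (j + 1) * pp m (j + 1) * (real (j + 1) + c) ^ q))
      = (\<Sum>j. ennreal m * ennreal (pp m j * (real j + (c + 1)) ^ q))"
  proof (rule suminf_cong)
    fix j
    have "real (j + 1) * pp m (j + 1) * (real (j + 1) + c) ^ q = m * (pp m j * (real j + (c + 1)) ^ q)"
      using pp_Suc[of j m] by (simp add: algebra_simps)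
    then show "ennreal (real (j + 1) * pp m (j + 1) * (real (j + 1) + c) ^ q) = ennreal m * ennreal (pp m j * (real j + (c + 1)) ^ q)"
      using m by (simp add: ennreal_mult')
  qed
  also have "\<dots> = ennreal m * (\<Sum>j. ennreal (pp m j * (real j + (c + 1)) ^ q))" by simp
  finally have eq: "(\<Sum>k. ennreal (pp m k * (real k + c) ^ Suc q)) =
     ennreal c * (\<Sum>k. ennreal (pp m k * (real k + c) ^ q)) + ennreal m * (\<Sum>j. ennreal (pp m j * (real j + (c + 1)) ^ q))"
    by simp
  have "\<dots> \<le> ennreal c * ennreal ((m + c + real q) ^ q) + ennreal m * ennreal ((m + (c + 1) + real q) ^ q)"
    using Suc.IH[of c] Suc.IH[of "c+1"] c by (intro add_mono mult_left_mono) auto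
  also have "\<dots> = ennreal (c * (m + c + real q) ^ q + m * (m + (c + 1) + real q) ^ q)"
    using c m by (simp add: ennreal_plus[symmetric] ennreal_mult[symmetric] del: ennreal_plus)
  also have "\<dots> \<le> ennreal ((m + c + real (Suc q)) ^ Suc q)"
  proof (rule ennreal_leI)
    have "c * (m + c + real q) ^ q \<le> c * (m + c + real (Suc q)) ^ q"
      using c m by (intro mult_left_mono power_mono) auto
    moreover have "m * (m + (c + 1) + real q) ^ q = m * (m + c + real (Suc q)) ^ q"
      by (simp add: algebra_simps)
    moreover have "(c + m) * (m + c + real (Suc q)) ^ q \<le> (m + c + real (Suc q)) * (m + c + real (Suc q)) ^ q"
      using c m by (intro mult_right_mono) auto
    ultimately show "c * (m + c + real q) ^ q + m * (m + (c + 1) + real q) ^ q \<le> (m + c + real (Suc q)) ^ Suc q"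
      by (simp add: algebra_simps)
  qed
  finally show ?case unfolding eq .
qed

lemma poisson_powr_moment:
  fixes m c b :: real and q :: nat
  assumes m: "m \<ge> 0" and c: "c \<ge> 0" and b: "0 \<le> b" "b \<le> real q" and q: "q \<ge> 1"
  shows "(\<Sum>k. ennreal (pp m k * (real k + c) powr b)) \<le> ennreal (2 * (m + c + real q) powr b)"
proof -
  define t where "t = m + c + real q"
  have t: "t > 0" using m c q by (simp add: t_def)
  have "(\<Sum>k. ennreal (pp m k * (real k + c) powr b))
      \<le> (\<Sum>k. ennreal (t powr b) * ennreal (pp m k) + ennreal (t powr b / t ^ q) * ennreal (pp m k * (real k + c) ^ q))"
  proof (rule suminf_le)
    fix k
    have "(real k + c) powr b \<le> t powr b + t powr b / t ^ q * (real k + c) ^ q"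
      by (rule young_pow[OF _ t b]) (use c in simp)
    then have "pp m k * (real k + c) powr b \<le> pp m k * (t powr b + t powr b / t ^ q * (real k + c) ^ q)"
      by (rule mult_left_mono) (rule pp_nonneg[OF m])
    also have "\<dots> = t powr b * pp m k + t powr b / t ^ q * (pp m k * (real k + c) ^ q)" by (simp add: algebra_simps)
    finally have "ennreal (pp m k * (real k + c) powr b) \<le> ennreal (t powr b * pp m k + t powr b / t ^ q * (pp m k * (real k + c) ^ q))"
      by (rule ennreal_leI)
    also have "\<dots> = ennreal (t powr b) * ennreal (pp m k) + ennreal (t powr b / t ^ q) * ennreal (pp m k * (real k + c) ^ q)"
    proof -
      have p: "0 \<le> pp m k" by (rule pp_nonneg[OF m])
      have h0: "0 \<le> pp m k * (real k + c) ^ q" using p c by simp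
      have tb: "0 \<le> t powr b" by simp
      have tbq: "0 \<le> t powr b / t ^ q" using t by simp
      have h1: "0 \<le> t powr b * pp m k" using p by simp
      have h2: "0 \<le> t powr b / t ^ q * (pp m k * (real k + c) ^ q)" using tbq h0 by (rule mult_nonneg_nonneg)
      show ?thesis by (simp only: ennreal_plus[OF h1 h2] ennreal_mult[OF tb p] ennreal_mult[OF tbq h0])
    qed
    finally show "ennreal (pp m k * (real k + c) powr b) \<le> \<dots>" .
  qed (auto intro: summableI)
  also have "\<dots> = ennreal (t powr b) * (\<Sum>k. ennreal (pp m k)) + ennreal (t powr b / t ^ q) * (\<Sum>k. ennreal (pp m k * (real k + c) ^ q))"
    by (subst suminf_add[symmetric]) (auto intro: summableI)
  also have "\<dots> \<le> ennreal (t powr b) * 1 + ennreal (t powr b / t ^ q) * ennreal (t ^ q)"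
    unfolding pp_sum[OF m] t_def by (intro add_mono mult_left_mono poisson_pow_moment[OF m c]) auto
  also have "\<dots> = ennreal (2 * t powr b)"
  proof -
    have tbq: "0 \<le> t powr b / t ^ q" using t by simp
    have tq: "0 \<le> t ^ q" using t by simp
    have "ennreal (t powr b / t ^ q) * ennreal (t ^ q) = ennreal (t powr b / t ^ q * t ^ q)"
      by (rule ennreal_mult[OF tbq tq, symmetric])
    also have "t powr b / t ^ q * t ^ q = t powr b" using t by simp
    finally have "ennreal (t powr b) * 1 + ennreal (t powr b / t ^ q) * ennreal (t ^ q) = ennreal (t powr b) + ennreal (t powr b)"
      by simp
    also have "\<dots> = ennreal (2 * t powr b)" by (simp add: ennreal_plus[symmetric] del: ennreal_plus)
    finally show ?thesis .
  qed
  finally show ?thesis unfolding t_def .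
qed

lemma Gamma_shift:
  fixes z :: real assumes z: "z > 0"
  shows "Gamma (z + real k) = pochhammer z k * Gamma z"
proof -
  have "Gamma z > 0" using z by simp
  moreover have "pochhammer z k = Gamma (z + real k) / Gamma z"
    using pochhammer_Gamma[of z k] z by (simp add: nonpos_Ints_def)
  ultimately show ?thesis by simp
qed

lemma poch_pos: "(z::real) > 0 \<Longrightarrow> pochhammer z k > 0"
  by (simp add: pochhammer_pos)

lemma ck_eq:
  fixes \<alpha> b :: real assumes a: "\<alpha> > 0" and ab: "\<alpha> + b > 0"
  shows "Gamma (\<alpha> + real k + b) / Gamma (\<alpha> + real k) =
         Gamma (\<alpha> + b) / Gamma \<alpha> * (pochhammer (\<alpha> + b) k / pochhammer \<alpha> k)"
proof -
  have "Gamma (\<alpha> + real k + b) = pochhammer (\<alpha> + b) k * Gamma (\<alpha> + b)"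
    using Gamma_shift[OF ab, of k] by (simp add: add_ac)
  moreover have "Gamma (\<alpha> + real k) = pochhammer \<alpha> k * Gamma \<alpha>" by (rule Gamma_shift[OF a])
  ultimately show ?thesis by (simp add: mult_ac)
qed

lemma max_powr_le:
  fixes m C b :: real assumes m: "m \<ge> 0" and C: "C \<ge> 0" and b: "b \<ge> 0"
  shows "(m + C) powr b \<le> 2 powr b * max 1 (C powr b) * (1 + m powr b)"
proof -
  have "(m + C) powr b \<le> (2 * max m C) powr b" using m C b by (intro powr_mono2) auto
  also have "\<dots> = 2 powr b * (max m C) powr b" using m C by (simp add: powr_mult)
  also have "(max m C) powr b \<le> m powr b + C powr b" by (simp add: max_def)
  also have "m powr b + C powr b \<le> max 1 (C powr b) * (1 + m powr b)"
  proof -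
    have "C powr b \<le> max 1 (C powr b)" by simp
    moreover have "m powr b \<le> max 1 (C powr b) * m powr b"
      by (rule mult_le_cancel_right1[THEN iffD2]) auto
    ultimately show ?thesis by (simp add: algebra_simps)
  qed
  finally show ?thesis by (simp add: mult_left_mono mult.assoc)
qed


lemma series_bound:
  fixes \<alpha> b rr :: real assumes a: "\<alpha> > 0" and ab: "\<alpha> + b > 0" and rr: "rr > 0"
  obtains D where "D \<ge> 0" "\<And>m. m \<ge> 0 \<Longrightarrow>
     (\<Sum>k. ennreal (pp m k) * ennreal (rr powr (-b) * Gamma (\<alpha> + real k + b) / Gamma (\<alpha> + real k)))
        \<le> ennreal (D * (1 + m powr b))"
proof (cases "b \<le> 0")
  case True
  define D0 where "D0 = rr powr (-b) * (Gamma (\<alpha> + b) / Gamma \<alpha>)"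
  have D0: "D0 \<ge> 0" using a ab by (simp add: D0_def)
  have ck: "rr powr (-b) * Gamma (\<alpha> + real k + b) / Gamma (\<alpha> + real k) \<le> D0" for k
  proof -
    have "pochhammer (\<alpha> + b) k \<le> pochhammer \<alpha> k"
      unfolding pochhammer_prod by (rule prod_mono) (use True ab in auto)
    then have le1: "pochhammer (\<alpha> + b) k / pochhammer \<alpha> k \<le> 1"
      using poch_pos[OF a, of k] by simp
    have "rr powr (-b) * Gamma (\<alpha> + real k + b) / Gamma (\<alpha> + real k)
        = D0 * (pochhammer (\<alpha> + b) k / pochhammer \<alpha> k)"
      unfolding D0_def by (simp only: times_divide_eq_right[symmetric] ck_eq[OF a ab] mult.assoc)
    also have "\<dots> \<le> D0 * 1" by (rule mult_left_mono[OF le1 D0])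
    finally show ?thesis by simp
  qed
  show ?thesis
  proof (rule that[OF D0])
    fix m :: real assume m: "m \<ge> 0"
    have "(\<Sum>k. ennreal (pp m k) * ennreal (rr powr (-b) * Gamma (\<alpha> + real k + b) / Gamma (\<alpha> + real k)))
        \<le> (\<Sum>k. ennreal (pp m k) * ennreal D0)"
      by (rule suminf_le) (auto intro!: summableI mult_left_mono ennreal_leI ck)
    also have "\<dots> = ennreal D0" using pp_sum[OF m] by simp
    also have "\<dots> \<le> ennreal (D0 * (1 + m powr b))"
      by (rule ennreal_leI) (use D0 in \<open>simp add: mult_le_cancel_left1\<close>)
    finally show "(\<Sum>k. ennreal (pp m k) * ennreal (rr powr (-b) * Gamma (\<alpha> + real k + b) / Gamma (\<alpha> + real k)))
        \<le> ennreal (D0 * (1 + m powr b))" .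
  qed
next
  case False
  then have b: "b > 0" by simp
  define q where "q = nat \<lceil>b\<rceil> + 1"
  have bq: "b \<le> real q" unfolding q_def by linarith
  have q1: "q \<ge> 1" unfolding q_def by simp
  define C where "C = \<alpha> + real q + real q"
  have C: "C \<ge> 0" using a by (simp add: C_def)
  define D where "D = rr powr (-b) * 2 * 2 * (2 powr b * max 1 (C powr b))"
  have D: "D \<ge> 0" by (simp add: D_def)
  have ck: "rr powr (-b) * Gamma (\<alpha> + real k + b) / Gamma (\<alpha> + real k) \<le> rr powr (-b) * 2 * (real k + (\<alpha> + real q)) powr b" for k
  proof -
    have "Gamma (\<alpha> + real k + b) / Gamma (\<alpha> + real k) \<le> 2 * (\<alpha> + real k + real q) powr b"
      by (rule gamma_ratio_bound) (use a b bq in auto)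
    then have "rr powr (-b) * (Gamma (\<alpha> + real k + b) / Gamma (\<alpha> + real k)) \<le> rr powr (-b) * (2 * (\<alpha> + real k + real q) powr b)"
      by (rule mult_left_mono) simp
    then show ?thesis by (simp add: mult.assoc add_ac)
  qed
  show ?thesis
  proof (rule that[OF D])
    fix m :: real assume m: "m \<ge> 0"
    have "(\<Sum>k. ennreal (pp m k) * ennreal (rr powr (-b) * Gamma (\<alpha> + real k + b) / Gamma (\<alpha> + real k)))
        \<le> (\<Sum>k. ennreal (rr powr (-b) * 2) * ennreal (pp m k * (real k + (\<alpha> + real q)) powr b))"
    proof (rule suminf_le)
      fix k
      have p: "0 \<le> pp m k" by (rule pp_nonneg[OF m])
      have "ennreal (pp m k) * ennreal (rr powr (-b) * Gamma (\<alpha> + real k + b) / Gamma (\<alpha> + real k))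
          \<le> ennreal (pp m k) * ennreal (rr powr (-b) * 2 * (real k + (\<alpha> + real q)) powr b)"
        by (intro mult_left_mono ennreal_leI ck) simp
      also have "\<dots> = ennreal (rr powr (-b) * 2) * ennreal (pp m k * (real k + (\<alpha> + real q)) powr b)"
      proof -
        have h1: "0 \<le> rr powr (-b) * 2" by simp
        have h2: "0 \<le> (real k + (\<alpha> + real q)) powr b" by simp
        have "ennreal (pp m k) * ennreal (rr powr (-b) * 2 * (real k + (\<alpha> + real q)) powr b)
            = ennreal (pp m k) * (ennreal (rr powr (-b) * 2) * ennreal ((real k + (\<alpha> + real q)) powr b))"
          by (simp only: ennreal_mult[OF h1 h2])
        also have "\<dots> = ennreal (rr powr (-b) * 2) * (ennreal (pp m k) * ennreal ((real k + (\<alpha> + real q)) powr b))"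
          by (simp only: mult.left_commute)
        also have "\<dots> = ennreal (rr powr (-b) * 2) * ennreal (pp m k * (real k + (\<alpha> + real q)) powr b)"
          by (simp only: ennreal_mult[OF p h2])
        finally show ?thesis .
      qed
      finally show "ennreal (pp m k) * ennreal (rr powr (-b) * Gamma (\<alpha> + real k + b) / Gamma (\<alpha> + real k))
          \<le> ennreal (rr powr (-b) * 2) * ennreal (pp m k * (real k + (\<alpha> + real q)) powr b)" .
    qed (auto intro: summableI)
    also have "\<dots> = ennreal (rr powr (-b) * 2) * (\<Sum>k. ennreal (pp m k * (real k + (\<alpha> + real q)) powr b))"
      by simp
    also have "\<dots> \<le> ennreal (rr powr (-b) * 2) * ennreal (2 * (m + (\<alpha> + real q) + real q) powr b)"
      by (intro mult_left_mono poisson_powr_moment[OF m _ _ bq q1]) (use a b in auto)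
    also have "m + (\<alpha> + real q) + real q = m + C" by (simp add: C_def)
    also have "ennreal (rr powr (-b) * 2) * ennreal (2 * (m + C) powr b) = ennreal (rr powr (-b) * 2 * (2 * (m + C) powr b))"
      by (rule ennreal_mult[symmetric]) auto
    also have "\<dots> \<le> ennreal (D * (1 + m powr b))"
    proof (rule ennreal_leI)
      have "(m + C) powr b \<le> 2 powr b * max 1 (C powr b) * (1 + m powr b)"
        by (rule max_powr_le[OF m C]) (use b in simp)
      then have "rr powr (-b) * 2 * (2 * (m + C) powr b) \<le> rr powr (-b) * 2 * (2 * (2 powr b * max 1 (C powr b) * (1 + m powr b)))"
        by (intro mult_left_mono) auto
      then show "rr powr (-b) * 2 * (2 * (m + C) powr b) \<le> D * (1 + m powr b)"
        by (simp add: D_def mult_ac)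
    qed
    finally show "(\<Sum>k. ennreal (pp m k) * ennreal (rr powr (-b) * Gamma (\<alpha> + real k + b) / Gamma (\<alpha> + real k)))
        \<le> ennreal (D * (1 + m powr b))" .
  qed
qed


lemma series_eval:
  fixes \<alpha> b rr m :: real assumes a: "\<alpha> > 0" and ab: "\<alpha> + b > 0" and rr: "rr > 0" and m: "m \<ge> 0"
    and fin: "(\<Sum>k. ennreal (pp m k) * ennreal (rr powr (-b) * Gamma (\<alpha> + real k + b) / Gamma (\<alpha> + real k))) \<noteq> \<top>"
  shows "(\<Sum>k. ennreal (pp m k) * ennreal (rr powr (-b) * Gamma (\<alpha> + real k + b) / Gamma (\<alpha> + real k)))
     = ennreal (rr powr (-b) * (Gamma (\<alpha> + b) / Gamma \<alpha>) * (exp (- m) * kummer_1F1 (\<alpha> + b) \<alpha> m))"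
    and "0 \<le> rr powr (-b) * (Gamma (\<alpha> + b) / Gamma \<alpha>) * (exp (- m) * kummer_1F1 (\<alpha> + b) \<alpha> m)"
proof -
  define f where "f k = pp m k * (rr powr (-b) * Gamma (\<alpha> + real k + b) / Gamma (\<alpha> + real k))" for k
  define K0 where "K0 = rr powr (-b) * (Gamma (\<alpha> + b) / Gamma \<alpha>) * exp (- m)"
  define t where "t k = pochhammer (\<alpha> + b) k / pochhammer \<alpha> k * m ^ k / fact k" for k
  have K0: "K0 > 0" using a ab rr Gamma_real_pos[OF a] Gamma_real_pos[OF ab] unfolding K0_def
    by (intro mult_pos_pos divide_pos_pos) auto
  have fnn: "f k \<ge> 0" for k using pp_nonneg[OF m, of k] a ab unfolding f_def by simp
  have e1: "ennreal (pp m k) * ennreal (rr powr (-b) * Gamma (\<alpha> + real k + b) / Gamma (\<alpha> + real k)) = ennreal (f k)" for k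
    unfolding f_def by (rule ennreal_mult'[symmetric]) (rule pp_nonneg[OF m])
  have fK: "f k = K0 * t k" for k
  proof -
    have "f k = (m ^ k / fact k * exp (- m)) * (rr powr (-b) * (Gamma (\<alpha> + b) / Gamma \<alpha> * (pochhammer (\<alpha> + b) k / pochhammer \<alpha> k)))"
      unfolding f_def pp_def by (simp only: times_divide_eq_right[symmetric] ck_eq[OF a ab])
    also have "\<dots> = K0 * t k" unfolding K0_def t_def by (simp add: field_simps)
    finally show ?thesis .
  qed
  have sf: "summable f" using fin unfolding e1 by (intro summable_suminf_not_top fnn)
  have st: "summable t"
  proof -
    have "summable (\<lambda>k. f k / K0)" by (rule summable_divide[OF sf])
    moreover have "(\<lambda>k. f k / K0) = t" using K0 by (simp add: fK)
    ultimately show ?thesis by simp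
  qed
  have "(\<Sum>k. f k) = K0 * (\<Sum>k. t k)" unfolding fK by (rule suminf_mult[OF st])
  also have "(\<Sum>k. t k) = kummer_1F1 (\<alpha> + b) \<alpha> m" unfolding t_def kummer_1F1_def ..
  finally have SV: "(\<Sum>k. f k) = rr powr (-b) * (Gamma (\<alpha> + b) / Gamma \<alpha>) * (exp (- m) * kummer_1F1 (\<alpha> + b) \<alpha> m)"
    unfolding K0_def by (simp add: mult.assoc)
  have "(\<Sum>k. ennreal (pp m k) * ennreal (rr powr (-b) * Gamma (\<alpha> + real k + b) / Gamma (\<alpha> + real k)))
      = ennreal (\<Sum>k. f k)" unfolding e1 by (rule suminf_ennreal2[OF fnn sf])
  then show "(\<Sum>k. ennreal (pp m k) * ennreal (rr powr (-b) * Gamma (\<alpha> + real k + b) / Gamma (\<alpha> + real k)))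
     = ennreal (rr powr (-b) * (Gamma (\<alpha> + b) / Gamma \<alpha>) * (exp (- m) * kummer_1F1 (\<alpha> + b) \<alpha> m))"
    unfolding SV .
  show "0 \<le> rr powr (-b) * (Gamma (\<alpha> + b) / Gamma \<alpha>) * (exp (- m) * kummer_1F1 (\<alpha> + b) \<alpha> m)"
    unfolding SV[symmetric] by (rule suminf_nonneg[OF sf fnn])
qed

theorem lemma2p6:
  fixes M :: "'a measure" and X :: "'a \<Rightarrow> real"
    and \<alpha> lam \<beta> \<tau> :: real
  assumes "prob_space M"
    and "\<alpha> > 0" and "lam > 0" and "\<alpha> + \<beta> > 0"
    and "X \<in> borel_measurable M"
    and "\<forall>\<omega>\<in>space M. X \<omega> > 0"
    and "integrable M (\<lambda>\<omega>. X \<omega> powr \<beta>)"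
    and "0 < \<tau>" and "\<tau> < 1"
  shows "integrable (smart_path_law \<alpha> lam \<tau> (distr M borel X)) (\<lambda>u. u powr \<beta>)
    \<and> (\<integral>u. u powr \<beta> \<partial>smart_path_law \<alpha> lam \<tau> (distr M borel X)) =
        (lam / (1 - \<tau>)) powr (- \<beta>) * (Gamma (\<alpha> + \<beta>) / Gamma \<alpha>) *
        (\<integral>x. exp (- lam * \<tau> * x / (1 - \<tau>)) *
              kummer_1F1 (\<alpha> + \<beta>) \<alpha> (lam * \<tau> * x / (1 - \<tau>)) \<partial>distr M borel X)"
proof -
  note a = assms(2) and l = assms(3) and ab = assms(4) and Xm = assms(5) and Xp = assms(6)
    and Xint = assms(7) and t0 = assms(8) and t1 = assms(9)
  interpret MP: prob_space M by (rule assms(1))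
  define PX where "PX = distr M borel X"
  define rr where "rr = lam / (1 - \<tau>)"
  define c0 where "c0 = lam * \<tau> / (1 - \<tau>)"
  define K where "K = (lam / (1 - \<tau>)) powr (- \<beta>) * (Gamma (\<alpha> + \<beta>) / Gamma \<alpha>)"
  define g where "g x = exp (- lam * \<tau> * x / (1 - \<tau>)) * kummer_1F1 (\<alpha> + \<beta>) \<alpha> (lam * \<tau> * x / (1 - \<tau>))" for x
  have c1: "1 - \<tau> > 0" using t1 by simp
  have rr: "rr > 0" using l c1 by (simp add: rr_def)
  have c0: "c0 > 0" using l t0 c1 by (simp add: c0_def)
  obtain D where D: "D \<ge> 0" and Db: "\<And>m. m \<ge> 0 \<Longrightarrow>
     (\<Sum>k. ennreal (pp m k) * ennreal (rr powr (-\<beta>) * Gamma (\<alpha> + real k + \<beta>) / Gamma (\<alpha> + real k)))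
        \<le> ennreal (D * (1 + m powr \<beta>))"
    using series_bound[OF a ab rr] by blast
  have PXprob: "prob_space PX" unfolding PX_def by (rule MP.prob_space_distr[OF Xm])
  have law: "smart_path_law \<alpha> lam \<tau> PX = PX \<bind> Np \<alpha> lam \<tau>"
    unfolding PX_def by (rule PX_eq[OF a l t0 t1 assms(1) Xm Xp])
  have Npm: "Np \<alpha> lam \<tau> \<in> PX \<rightarrow>\<^sub>M subprob_algebra borel"
    using Np_meas[OF a l t0 t1] unfolding PX_def by (simp add: measurable_cong_sets[OF sets_distr refl])
  have pos: "(\<integral>\<^sup>+u. ennreal (u powr \<beta>) \<partial>Np \<alpha> lam \<tau> x) = ennreal (K * g x) \<and> 0 \<le> K * g x
      \<and> K * g x \<le> D * (1 + c0 powr \<beta> * x powr \<beta>)" if x: "x > 0" for x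
  proof -
    define m where "m = lam * \<tau> * x / (1 - \<tau>)"
    have m: "m \<ge> 0" using l t0 c1 x by (simp add: m_def)
    have mc: "m = c0 * x" by (simp add: m_def c0_def)
    have S: "(\<integral>\<^sup>+u. ennreal (u powr \<beta>) \<partial>Np \<alpha> lam \<tau> x)
        = (\<Sum>k. ennreal (pp m k) * ennreal (rr powr (-\<beta>) * Gamma (\<alpha> + real k + \<beta>) / Gamma (\<alpha> + real k)))"
      using Np_moment[OF a l t0 t1 ab, of x] x by (simp add: pp_def rr_def m_def)
    have le: "(\<Sum>k. ennreal (pp m k) * ennreal (rr powr (-\<beta>) * Gamma (\<alpha> + real k + \<beta>) / Gamma (\<alpha> + real k)))
        \<le> ennreal (D * (1 + m powr \<beta>))" by (rule Db[OF m])
    then have fin: "(\<Sum>k. ennreal (pp m k) * ennreal (rr powr (-\<beta>) * Gamma (\<alpha> + real k + \<beta>) / Gamma (\<alpha> + real k))) \<noteq> \<top>"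
      using top.not_eq_extremum by (metis ennreal_less_top not_less_iff_gr_or_eq order.strict_trans1)
    have Kg: "rr powr (-\<beta>) * (Gamma (\<alpha> + \<beta>) / Gamma \<alpha>) * (exp (- m) * kummer_1F1 (\<alpha> + \<beta>) \<alpha> m) = K * g x"
      by (simp add: K_def g_def rr_def m_def)
    note E = series_eval[OF a ab rr m fin, unfolded Kg]
    have "ennreal (K * g x) \<le> ennreal (D * (1 + m powr \<beta>))" using le E(1) by simp
    then have "K * g x \<le> D * (1 + m powr \<beta>)" using D by (simp add: ennreal_le_iff)
    also have "m powr \<beta> = c0 powr \<beta> * x powr \<beta>" unfolding mc using c0 x by (simp add: powr_mult)
    finally show ?thesis using S E by simp
  qed
  have AEpos: "AE x in PX. x > 0"
    unfolding PX_def by (subst AE_distr_iff) (auto simp: Xm Xp intro!: AE_I2)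
  have gm: "g \<in> borel_measurable borel" unfolding g_def kummer_1F1_def by measurable
  have nnE: "(\<integral>\<^sup>+u. ennreal (u powr \<beta>) \<partial>smart_path_law \<alpha> lam \<tau> PX) = (\<integral>\<^sup>+x. ennreal (K * g x) \<partial>PX)"
  proof -
    have "(\<integral>\<^sup>+u. ennreal (u powr \<beta>) \<partial>smart_path_law \<alpha> lam \<tau> PX)
        = (\<integral>\<^sup>+x. \<integral>\<^sup>+u. ennreal (u powr \<beta>) \<partial>Np \<alpha> lam \<tau> x \<partial>PX)"
      unfolding law by (rule nn_integral_bind[OF _ Npm]) measurable
    also have "\<dots> = (\<integral>\<^sup>+x. ennreal (K * g x) \<partial>PX)"
      by (rule nn_integral_cong_AE) (rule eventually_mono[OF AEpos], use pos in blast)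
    finally show ?thesis .
  qed
  have Xb: "integrable PX (\<lambda>x. x powr \<beta>)"
    unfolding PX_def using Xint Xm by (subst integrable_distr_eq) auto
  have finX: "(\<integral>\<^sup>+x. ennreal (x powr \<beta>) \<partial>PX) < \<infinity>"
    using integrableD(2)[OF Xb] by (simp add: less_top)
  have finE: "(\<integral>\<^sup>+x. ennreal (K * g x) \<partial>PX) < \<infinity>"
  proof -
    have "(\<integral>\<^sup>+x. ennreal (K * g x) \<partial>PX) \<le> (\<integral>\<^sup>+x. ennreal D + ennreal (D * c0 powr \<beta>) * ennreal (x powr \<beta>) \<partial>PX)"
    proof (rule nn_integral_mono_AE)
      show "AE x in PX. ennreal (K * g x) \<le> ennreal D + ennreal (D * c0 powr \<beta>) * ennreal (x powr \<beta>)"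
      proof (rule eventually_mono[OF AEpos])
        fix x :: real assume x: "x > 0"
        have "K * g x \<le> D * (1 + c0 powr \<beta> * x powr \<beta>)" using pos[OF x] by blast
        also have "\<dots> = D + D * c0 powr \<beta> * x powr \<beta>" by (simp add: algebra_simps)
        finally have "ennreal (K * g x) \<le> ennreal (D + D * c0 powr \<beta> * x powr \<beta>)" by (rule ennreal_leI)
        also have "\<dots> = ennreal D + ennreal (D * c0 powr \<beta>) * ennreal (x powr \<beta>)"
          using D by (simp add: ennreal_plus ennreal_mult)
        finally show "ennreal (K * g x) \<le> ennreal D + ennreal (D * c0 powr \<beta>) * ennreal (x powr \<beta>)" .
      qed
    qed
    also have "\<dots> = ennreal D * emeasure PX (space PX) + ennreal (D * c0 powr \<beta>) * (\<integral>\<^sup>+x. ennreal (x powr \<beta>) \<partial>PX)"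
    proof -
      have mx: "(\<lambda>x. ennreal (x powr \<beta>)) \<in> borel_measurable PX" unfolding PX_def by measurable
      have "(\<integral>\<^sup>+x. ennreal D + ennreal (D * c0 powr \<beta>) * ennreal (x powr \<beta>) \<partial>PX)
          = (\<integral>\<^sup>+x. ennreal D \<partial>PX) + (\<integral>\<^sup>+x. ennreal (D * c0 powr \<beta>) * ennreal (x powr \<beta>) \<partial>PX)"
        by (rule nn_integral_add) (use mx in auto)
      also have "(\<integral>\<^sup>+x. ennreal (D * c0 powr \<beta>) * ennreal (x powr \<beta>) \<partial>PX) = ennreal (D * c0 powr \<beta>) * (\<integral>\<^sup>+x. ennreal (x powr \<beta>) \<partial>PX)"
        by (rule nn_integral_cmult[OF mx])
      also have "(\<integral>\<^sup>+x. ennreal D \<partial>PX) = ennreal D * emeasure PX (space PX)" by (rule nn_integral_const)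
      finally show ?thesis .
    qed
    also have "\<dots> < \<infinity>"
      using finX prob_space.emeasure_space_1[OF PXprob] by (simp add: ennreal_mult_less_top)
    finally show ?thesis .
  qed
  have sets_law: "sets (smart_path_law \<alpha> lam \<tau> PX) = sets borel"
    unfolding law by (rule sets_bind_measurable[OF Npm]) (simp add: PX_def)
  have um: "(\<lambda>u. u powr \<beta>) \<in> borel_measurable (smart_path_law \<alpha> lam \<tau> PX)"
    by (simp add: measurable_cong_sets[OF sets_law refl])
  have int: "integrable (smart_path_law \<alpha> lam \<tau> PX) (\<lambda>u. u powr \<beta>)"
    by (rule integrableI_nonneg[OF um]) (use finE in \<open>auto simp: nnE infinity_ennreal_def\<close>)
  have "(\<integral>u. u powr \<beta> \<partial>smart_path_law \<alpha> lam \<tau> PX) = enn2real (\<integral>\<^sup>+u. ennreal (u powr \<beta>) \<partial>smart_path_law \<alpha> lam \<tau> PX)"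
    by (rule integral_eq_nn_integral[OF um]) auto
  also have "\<dots> = enn2real (\<integral>\<^sup>+x. ennreal (K * g x) \<partial>PX)" by (simp only: nnE)
  also have "\<dots> = (\<integral>x. K * g x \<partial>PX)"
  proof (rule integral_eq_nn_integral[symmetric])
    show "(\<lambda>x. K * g x) \<in> borel_measurable PX" using gm unfolding PX_def by simp
    show "AE x in PX. 0 \<le> K * g x" by (rule eventually_mono[OF AEpos]) (use pos in blast)
  qed
  also have "\<dots> = K * (\<integral>x. g x \<partial>PX)" by simp
  finally show ?thesis using int unfolding K_def g_def PX_def by simp
qed

end
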